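(* Consider an unregularized MDP and run PMD with Bregman distance the squared Euclidean distance, i.e. $D^{\pi'}_{\pi}(s)=\tfrac12\|\pi'(\cdot\mid s)-\pi(\cdot\mid s)\|_2^2$. Let $N:=\lceil 4(1-\gamma)^{-1}\rceil$, $T:=\lceil\log_2(|\mathcal S|^3|\mathcal A|/(1-\gamma)^2)\rceil+1$, and use the step sizes $$\eta_t=\frac{2^{t+1}}{\Delta_{NT\lfloor t/(NT)\rfloor}},\qquad \Delta_{j}:=(1-\gamma)^{-1}\max_{s\in\mathcal S}g^{\pi_{j}}(s).$$ Then for any iteration $\tau\ge|\mathcal S|(|\mathcal A|-1)NT$, the greedy policy is optimal: $\hat\pi_\tau=\pi^*$.
   Context: An unregularized infinite-horizon discounted MDP ($h\equiv0$): finite $\mathcal S$, $\mathcal A$, transition probabilities $\mathcal P(s'\mid s,a)$, cost $c$, discount $\gamma\in[0,1)$. A policy assigns $\pi(\cdot\mid s)\in\Delta_{|\mathcal A|}$. $V^\pi(s)=\mathbb E[\sum_{t\ge0}\gamma^tc(s_t,a_t)\mid s_0=s,\ a_t\sim\pi(\cdot\mid s_t),\ s_{t+1}\sim\mathcal P(\cdot\mid s_t,a_t)]$, $Q^\pi(s,a)$ the same with $a_0=a$. Advantage $\psi^\pi(s,p):=\langle Q^\pi(s,\cdot),p\rangle-V^\pi(s)$; gap $g^\pi(s):=\max_{p\in\Delta_{|\mathcal A|}}\{-\psi^\pi(s,p)\}$. $\pi^*$ is the optimal policy ($V^{\pi^*}\le V^\pi$ pointwise for all $\pi$). PMD with this distance: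 $\pi_{t+1}(\cdot\mid s)=\operatorname{argmin}_{p\in\Delta_{|\mathcal A|}}\{\eta_t\langle Q^{\pi_t}(s,\cdot),p\rangle+\tfrac12\|p-\pi_t(\cdot\mid s)\|_2^2\}$ for all $s$, from an initial policy $\pi_0$. The greedy policy $\hat\pi_\tau$ of $\pi_\tau$ is given by $\hat\pi_\tau(\cdot\mid s)\in\operatorname{argmin}_{p\in\Delta_{|\mathcal A|}}\psi^{\pi_\tau}(s,p)$, chosen to be a vertex of the simplex, ties broken arbitrarily. *)

theory Defs
  imports "HOL-Analysis.Analysis"
begin

definition prob_simplex :: "('a::finite \<Rightarrow> real) \<Rightarrow> bool" where
  "prob_simplex p \<longleftrightarrow> (\<forall>a. 0 \<le> p a) \<and> (\<Sum>a\<in>UNIV. p a) = 1"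

definition is_policy :: "('s \<Rightarrow> 'a::finite \<Rightarrow> real) \<Rightarrow> bool" where
  "is_policy \<pi> \<longleftrightarrow> (\<forall>s. prob_simplex (\<pi> s))"

definition stochastic_kernel :: "('s::finite \<Rightarrow> 'a \<Rightarrow> 's \<Rightarrow> real) \<Rightarrow> bool" where
  "stochastic_kernel P \<longleftrightarrow> (\<forall>s a. (\<forall>s'. 0 \<le> P s a s') \<and> (\<Sum>s'\<in>UNIV. P s a s') = 1)"

definition Ppi :: "('s \<Rightarrow> 'a \<Rightarrow> 's \<Rightarrow> real) \<Rightarrow> ('s \<Rightarrow> 'a::finite \<Rightarrow> real) \<Rightarrow> 's \<Rightarrow> 's \<Rightarrow> real" where
  "Ppi P \<pi> s s' = (\<Sum>a\<in>UNIV. \<pi> s a * P s a s')"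

fun Pn :: "('s::finite \<Rightarrow> 'a \<Rightarrow> 's \<Rightarrow> real) \<Rightarrow> ('s \<Rightarrow> 'a::finite \<Rightarrow> real) \<Rightarrow> nat \<Rightarrow> 's \<Rightarrow> 's \<Rightarrow> real" where
  "Pn P \<pi> 0 s s' = (if s = s' then 1 else 0)"
| "Pn P \<pi> (Suc n) s s' = (\<Sum>s''\<in>UNIV. Pn P \<pi> n s s'' * Ppi P \<pi> s'' s')"

definition Vf :: "('s::finite \<Rightarrow> 'a \<Rightarrow> 's \<Rightarrow> real) \<Rightarrow> ('s \<Rightarrow> 'a::finite \<Rightarrow> real) \<Rightarrow> real
    \<Rightarrow> ('s \<Rightarrow> 'a \<Rightarrow> real) \<Rightarrow> 's \<Rightarrow> real" where
  "Vf P c \<gamma> \<pi> s = (\<Sum>t. \<gamma> ^ t * (\<Sum>s'\<in>UNIV. Pn P \<pi> t s s' * (\<Sum>a\<in>UNIV. \<pi> s' a * c s' a)))"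

definition Qf :: "('s::finite \<Rightarrow> 'a \<Rightarrow> 's \<Rightarrow> real) \<Rightarrow> ('s \<Rightarrow> 'a::finite \<Rightarrow> real) \<Rightarrow> real
    \<Rightarrow> ('s \<Rightarrow> 'a \<Rightarrow> real) \<Rightarrow> 's \<Rightarrow> 'a \<Rightarrow> real" where
  "Qf P c \<gamma> \<pi> s a = c s a + \<gamma> * (\<Sum>s'\<in>UNIV. P s a s' * Vf P c \<gamma> \<pi> s')"

definition adv where
  "adv P c \<gamma> \<pi> s p = (\<Sum>a\<in>UNIV. Qf P c \<gamma> \<pi> s a * p a) - Vf P c \<gamma> \<pi> s"

text \<open>Gap g^\<pi>(s) = max over the prob_simplex of -psi^\<pi>(s,p) (attained; written as Sup).\<close>
definition gap where
  "gap P c \<gamma> \<pi> s = Sup {- adv P c \<gamma> \<pi> s p | p. prob_simplex p}"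

definition optimal_policy where
  "optimal_policy P c \<gamma> \<pi> \<longleftrightarrow> is_policy \<pi> \<and>
     (\<forall>\<pi>'. is_policy \<pi>' \<longrightarrow> (\<forall>s. Vf P c \<gamma> \<pi> s \<le> Vf P c \<gamma> \<pi>' s))"

definition pmd_obj where
  "pmd_obj P c \<gamma> \<pi> \<eta> s p =
     \<eta> * (\<Sum>a\<in>UNIV. Qf P c \<gamma> \<pi> s a * p a) + 1/2 * (\<Sum>a\<in>UNIV. (p a - \<pi> s a)^2)"

definition Delta where
  "Delta P c \<gamma> pis j = (1 / (1 - \<gamma>)) * (MAX s\<in>UNIV. gap P c \<gamma> (pis j) s)"

definition N_param :: "real \<Rightarrow> nat" where
  "N_param \<gamma> = nat \<lceil>4 / (1 - \<gamma>)\<rceil>"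

definition T_param :: "real \<Rightarrow> nat \<Rightarrow> nat \<Rightarrow> nat" where
  "T_param \<gamma> nS nA = nat \<lceil>log 2 (real nS ^ 3 * real nA / (1 - \<gamma>)^2)\<rceil> + 1"

definition step_size where
  "step_size P c \<gamma> (pis :: nat \<Rightarrow> 's::finite \<Rightarrow> 'a::finite \<Rightarrow> real) t =
     (let NT = N_param \<gamma> * T_param \<gamma> CARD('s) CARD('a)
      in 2 ^ (t + 1) / Delta P c \<gamma> pis (NT * (t div NT)))"

definition is_pmd_sequence where
  "is_pmd_sequence P c \<gamma> pis \<longleftrightarrow> is_policy (pis 0) \<and>
     (\<forall>t s. prob_simplex (pis (Suc t) s) \<and>
        (\<forall>p. prob_simplex p \<longrightarrow>
           pmd_obj P c \<gamma> (pis t) (step_size P c \<gamma> pis t) s (pis (Suc t) s)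
             \<le> pmd_obj P c \<gamma> (pis t) (step_size P c \<gamma> pis t) s p))"

definition is_greedy where
  "is_greedy P c \<gamma> \<pi> pihat \<longleftrightarrow>
     (\<forall>s. (\<exists>a. \<forall>a'. pihat s a' = (if a' = a then 1 else 0)) \<and>
          (\<forall>p. prob_simplex p \<longrightarrow> adv P c \<gamma> \<pi> s (pihat s) \<le> adv P c \<gamma> \<pi> s p))"

end

theory Submission imports Defs begin

definition gobj :: "real \<Rightarrow> ('a::finite \<Rightarrow> real) \<Rightarrow> ('a \<Rightarrow> real) \<Rightarrow> ('a \<Rightarrow> real) \<Rightarrow> real" where
  "gobj \<eta> q0 \<pi>0 p = \<eta> * (\<Sum>a\<in>UNIV. q0 a * p a) + 1/2 * (\<Sum>a\<in>UNIV. (p a - \<pi>0 a)^2)"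

lemma simplex_le1: "prob_simplex p \<Longrightarrow> p a \<le> (1::real)"
proof -
  assume h: "prob_simplex p"
  have "p a \<le> (\<Sum>b\<in>UNIV. p b)" by (rule member_le_sum) (use h in \<open>auto simp: prob_simplex_def\<close>)
  thus ?thesis using h by (simp add: prob_simplex_def)
qed

lemma gstep_le_self:
  fixes p' \<pi>0 q0 :: "'a::finite \<Rightarrow> real"
  assumes e: "0 \<le> \<eta>" and sp: "prob_simplex \<pi>0"
    and m: "gobj \<eta> q0 \<pi>0 p' \<le> gobj \<eta> q0 \<pi>0 \<pi>0"
  shows "(\<Sum>a\<in>UNIV. q0 a * p' a) \<le> (\<Sum>a\<in>UNIV. q0 a * \<pi>0 a)"
proof (cases "\<eta> = 0")
  case True
  hence "(\<Sum>a\<in>UNIV. (p' a - \<pi>0 a)^2) \<le> 0" using m unfolding gobj_def by simp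
  hence "\<forall>a\<in>UNIV. (p' a - \<pi>0 a)^2 = 0"
    using sum_nonneg_eq_0_iff[of UNIV "\<lambda>a. (p' a - \<pi>0 a)^2"]
    by (metis (no_types, lifting) antisym finite_class.finite_UNIV sum_nonneg zero_le_power2)
  hence "p' = \<pi>0" by auto
  thus ?thesis by simp
next
  case False
  hence ep: "0 < \<eta>" using e by simp
  have "0 \<le> (\<Sum>a\<in>UNIV. (p' a - \<pi>0 a)^2)" by (intro sum_nonneg) simp
  hence "\<eta> * (\<Sum>a\<in>UNIV. q0 a * p' a) \<le> \<eta> * (\<Sum>a\<in>UNIV. q0 a * \<pi>0 a)"
    using m unfolding gobj_def by simp
  thus ?thesis using ep by simp
qed

lemma gstep_approx:
  fixes p' \<pi>0 q0 :: "'a::finite \<Rightarrow> real"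
  assumes e: "0 < \<eta>" and sp: "prob_simplex \<pi>0"
    and m: "gobj \<eta> q0 \<pi>0 p' \<le> gobj \<eta> q0 \<pi>0 (\<lambda>x. if x = b then 1 else 0)"
  shows "(\<Sum>a\<in>UNIV. q0 a * p' a) \<le> q0 b + 1 / \<eta>"
proof -
  let ?v = "\<lambda>x. if x = b then (1::real) else 0"
  have s1: "(\<Sum>a\<in>UNIV. q0 a * ?v a) = q0 b"
  proof -
    have "\<And>a. q0 a * ?v a = (if a = b then q0 b else 0)" by simp
    thus ?thesis by (simp add: sum.delta')
  qed
  have "(\<Sum>a\<in>UNIV. (?v a - \<pi>0 a)^2) \<le> (\<Sum>a\<in>UNIV. ?v a + \<pi>0 a)"
  proof (rule sum_mono)
    fix a
    have "0 \<le> \<pi>0 a" "\<pi>0 a \<le> 1" using sp simplex_le1[OF sp] by (auto simp: prob_simplex_def)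
    moreover have sq: "\<pi>0 a * \<pi>0 a \<le> \<pi>0 a" using calculation by (intro mult_right_le_one_le) auto
    ultimately show "(?v a - \<pi>0 a)^2 \<le> ?v a + \<pi>0 a"
      by (cases "a = b") (auto simp: power2_eq_square algebra_simps)
  qed
  also have "\<dots> = 2" using sp by (simp add: sum.distrib sum.delta' prob_simplex_def)
  finally have sq: "(\<Sum>a\<in>UNIV. (?v a - \<pi>0 a)^2) \<le> 2" .
  have "0 \<le> (\<Sum>a\<in>UNIV. (p' a - \<pi>0 a)^2)" by (intro sum_nonneg) simp
  hence "\<eta> * (\<Sum>a\<in>UNIV. q0 a * p' a) \<le> \<eta> * q0 b + 1"
    using m sq unfolding gobj_def s1 by linarith
  hence "\<eta> * (\<Sum>a\<in>UNIV. q0 a * p' a) \<le> \<eta> * (q0 b + 1 / \<eta>)" using e by (simp add: algebra_simps)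
  thus ?thesis using e by simp
qed

lemma gstep_elim:
  fixes p' \<pi>0 q0 :: "'a::finite \<Rightarrow> real"
  assumes sp: "prob_simplex \<pi>0" and sp': "prob_simplex p'"
    and m: "\<And>p. prob_simplex p \<Longrightarrow> gobj \<eta> q0 \<pi>0 p' \<le> gobj \<eta> q0 \<pi>0 p"
    and big: "2 \<le> \<eta> * (q0 a0 - q0 a1)"
  shows "p' a0 = 0"
proof (rule ccontr)
  assume "p' a0 \<noteq> 0"
  hence pos: "0 < p' a0" using sp' by (auto simp: prob_simplex_def intro: order.not_eq_order_implies_strict)
  have ne: "a0 \<noteq> a1" using big by auto
  define \<epsilon> where "\<epsilon> = p' a0 / 2"
  have ep: "0 < \<epsilon>" "\<epsilon> < p' a0" using pos unfolding \<epsilon>_def by auto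
  define d :: "'a \<Rightarrow> real" where "d = (\<lambda>x. (if x = a1 then 1 else 0) - (if x = a0 then 1 else 0))"
  define q where "q = (\<lambda>x. p' x + \<epsilon> * d x)"
  have dsum: "(\<Sum>x\<in>UNIV. f x * d x) = f a1 - f a0" for f :: "'a \<Rightarrow> real"
  proof -
    have "\<And>x. f x * d x = (if x = a1 then f a1 else 0) - (if x = a0 then f a0 else 0)"
      unfolding d_def by auto
    thus ?thesis by (simp add: sum_subtractf sum.delta')
  qed
  have d0: "(\<Sum>x\<in>UNIV. d x) = 0" using dsum[of "\<lambda>_. 1"] by simp
  have dsq: "(\<Sum>x\<in>UNIV. (d x)^2) = 2"
  proof -
    have "\<And>x. (d x)^2 = (if x = a1 then 1 else 0) + (if x = a0 then 1 else 0)"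
      unfolding d_def using ne by auto
    thus ?thesis using ne by (simp add: sum.distrib sum.delta')
  qed
  have qs: "prob_simplex q"
    unfolding prob_simplex_def
  proof
    show "\<forall>x. 0 \<le> q x"
    proof
      fix x
      have "0 \<le> p' x" using sp' by (simp add: prob_simplex_def)
      thus "0 \<le> q x" unfolding q_def d_def using ep ne by auto
    qed
    show "(\<Sum>x\<in>UNIV. q x) = 1" unfolding q_def using sp' d0
      by (simp add: sum.distrib sum_distrib_left[symmetric] prob_simplex_def)
  qed
  have lin: "(\<Sum>x\<in>UNIV. q0 x * q x) = (\<Sum>x\<in>UNIV. q0 x * p' x) + \<epsilon> * (q0 a1 - q0 a0)"
  proof -
    have "(\<Sum>x\<in>UNIV. q0 x * q x) = (\<Sum>x\<in>UNIV. q0 x * p' x) + \<epsilon> * (\<Sum>x\<in>UNIV. q0 x * d x)"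
      unfolding q_def by (simp add: algebra_simps sum.distrib sum_distrib_left)
    thus ?thesis by (simp add: dsum)
  qed
  have quad: "(\<Sum>x\<in>UNIV. (q x - \<pi>0 x)^2) = (\<Sum>x\<in>UNIV. (p' x - \<pi>0 x)^2)
      + 2 * \<epsilon> * ((p' a1 - \<pi>0 a1) - (p' a0 - \<pi>0 a0)) + \<epsilon>^2 * 2"
  proof -
    have "\<And>x. (q x - \<pi>0 x)^2 = (p' x - \<pi>0 x)^2 + 2 * \<epsilon> * ((p' x - \<pi>0 x) * d x) + \<epsilon>^2 * (d x)^2"
      unfolding q_def by (simp add: power2_eq_square algebra_simps)
    hence "(\<Sum>x\<in>UNIV. (q x - \<pi>0 x)^2) = (\<Sum>x\<in>UNIV. (p' x - \<pi>0 x)^2)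
      + 2 * \<epsilon> * (\<Sum>x\<in>UNIV. (p' x - \<pi>0 x) * d x) + \<epsilon>^2 * (\<Sum>x\<in>UNIV. (d x)^2)"
      by (simp add: sum.distrib sum_distrib_left)
    thus ?thesis by (simp only: dsum dsq)
  qed
  have b1: "p' a1 \<le> 1" by (rule simplex_le1[OF sp'])
  have b2: "\<pi>0 a0 \<le> 1" by (rule simplex_le1[OF sp])
  have b3: "0 \<le> \<pi>0 a1" using sp by (simp add: prob_simplex_def)
  have "gobj \<eta> q0 \<pi>0 q - gobj \<eta> q0 \<pi>0 p' =
     \<epsilon> * (\<eta> * (q0 a1 - q0 a0) + (p' a1 - \<pi>0 a1) - (p' a0 - \<pi>0 a0) + \<epsilon>)"
    unfolding gobj_def lin quad by (simp add: algebra_simps power2_eq_square)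
  also have "\<dots> < 0"
  proof (rule mult_pos_neg[OF ep(1)])
    have "\<eta> * (q0 a1 - q0 a0) \<le> -2" using big by (simp add: algebra_simps)
    thus "\<eta> * (q0 a1 - q0 a0) + (p' a1 - \<pi>0 a1) - (p' a0 - \<pi>0 a0) + \<epsilon> < 0"
      using b1 b2 b3 ep by linarith
  qed
  finally have "gobj \<eta> q0 \<pi>0 q < gobj \<eta> q0 \<pi>0 p'" by simp
  thus False using m[OF qs] by simp
qed

locale mdp =
  fixes P :: "'s::finite \<Rightarrow> 'a::finite \<Rightarrow> 's \<Rightarrow> real"
    and c :: "'s \<Rightarrow> 'a \<Rightarrow> real"
    and \<gamma> :: real
  assumes sk: "stochastic_kernel P" and g0: "0 \<le> \<gamma>" and g1: "\<gamma> < 1"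
begin

lemma P_nonneg: "0 \<le> P s a s'" using sk unfolding stochastic_kernel_def by auto
lemma P_sum: "(\<Sum>s'\<in>UNIV. P s a s') = 1" using sk unfolding stochastic_kernel_def by auto

lemma Ppi_nonneg: "is_policy \<pi> \<Longrightarrow> 0 \<le> Ppi P \<pi> s s'"
  unfolding Ppi_def is_policy_def prob_simplex_def
  by (auto intro!: sum_nonneg mult_nonneg_nonneg P_nonneg)

lemma Ppi_sum: "is_policy \<pi> \<Longrightarrow> (\<Sum>s'\<in>UNIV. Ppi P \<pi> s s') = 1"
proof -
  assume "is_policy \<pi>"
  hence "(\<Sum>a\<in>UNIV. \<pi> s a) = 1" unfolding is_policy_def prob_simplex_def by auto
  moreover have "(\<Sum>s'\<in>UNIV. Ppi P \<pi> s s') = (\<Sum>s'\<in>UNIV. \<Sum>a\<in>UNIV. \<pi> s a * P s a s')"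
    unfolding Ppi_def ..
  moreover have "\<dots> = (\<Sum>a\<in>UNIV. \<Sum>s'\<in>UNIV. \<pi> s a * P s a s')" by (rule sum.swap)
  moreover have "\<dots> = (\<Sum>a\<in>UNIV. \<pi> s a * (\<Sum>s'\<in>UNIV. P s a s'))" by (simp add: sum_distrib_left)
  ultimately show ?thesis by (simp add: P_sum)
qed

lemma Pn_alt: "Pn P \<pi> (Suc n) s s' = (\<Sum>s''\<in>UNIV. Ppi P \<pi> s s'' * Pn P \<pi> n s'' s')"
proof (induction n arbitrary: s s')
  case 0
  have "\<And>s''. Ppi P \<pi> s s'' * (if s'' = s' then 1 else 0) = (if s'' = s' then Ppi P \<pi> s s' else 0)" by simp
  moreover have "\<And>s''. (if s = s'' then 1 else 0) * Ppi P \<pi> s'' s' = (if s = s'' then Ppi P \<pi> s s' else 0)" by simp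
  ultimately show ?case by (simp add: sum.delta sum.delta')
next
  case (Suc n)
  have "Pn P \<pi> (Suc (Suc n)) s s' = (\<Sum>s''\<in>UNIV. (\<Sum>x\<in>UNIV. Ppi P \<pi> s x * Pn P \<pi> n x s'') * Ppi P \<pi> s'' s')"
    by (subst Pn.simps(2)) (simp only: Suc.IH)
  also have "\<dots> = (\<Sum>s''\<in>UNIV. \<Sum>x\<in>UNIV. Ppi P \<pi> s x * (Pn P \<pi> n x s'' * Ppi P \<pi> s'' s'))"
    by (simp add: sum_distrib_right mult.assoc)
  also have "\<dots> = (\<Sum>x\<in>UNIV. \<Sum>s''\<in>UNIV. Ppi P \<pi> s x * (Pn P \<pi> n x s'' * Ppi P \<pi> s'' s'))"
    by (rule sum.swap)
  also have "\<dots> = (\<Sum>x\<in>UNIV. Ppi P \<pi> s x * (\<Sum>s''\<in>UNIV. Pn P \<pi> n x s'' * Ppi P \<pi> s'' s'))"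
    by (simp add: sum_distrib_left)
  also have "\<dots> = (\<Sum>x\<in>UNIV. Ppi P \<pi> s x * Pn P \<pi> (Suc n) x s')" by simp
  finally show ?case .
qed

lemma Pn_nonneg: "is_policy \<pi> \<Longrightarrow> 0 \<le> Pn P \<pi> n s s'"
  by (induction n arbitrary: s') (auto intro!: sum_nonneg mult_nonneg_nonneg Ppi_nonneg)

lemma Pn_sum: "is_policy \<pi> \<Longrightarrow> (\<Sum>s'\<in>UNIV. Pn P \<pi> n s s') = 1"
proof (induction n arbitrary: s)
  case 0
  then show ?case by simp
next
  case (Suc n)
  have "(\<Sum>s'\<in>UNIV. Pn P \<pi> (Suc n) s s') = (\<Sum>s'\<in>UNIV. \<Sum>x\<in>UNIV. Pn P \<pi> n s x * Ppi P \<pi> x s')"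
    by simp
  also have "\<dots> = (\<Sum>x\<in>UNIV. \<Sum>s'\<in>UNIV. Pn P \<pi> n s x * Ppi P \<pi> x s')" by (rule sum.swap)
  also have "\<dots> = (\<Sum>x\<in>UNIV. Pn P \<pi> n s x * (\<Sum>s'\<in>UNIV. Ppi P \<pi> x s'))"
    by (simp add: sum_distrib_left)
  also have "\<dots> = 1" using Suc by (simp add: Ppi_sum)
  finally show ?case .
qed

lemma Pn_le1: "is_policy \<pi> \<Longrightarrow> Pn P \<pi> n s s' \<le> 1"
proof -
  assume p: "is_policy \<pi>"
  have "Pn P \<pi> n s s' \<le> (\<Sum>x\<in>UNIV. Pn P \<pi> n s x)"
    by (rule member_le_sum) (auto intro: Pn_nonneg[OF p])
  thus ?thesis using Pn_sum[OF p] by simp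
qed

definition cp :: "('s \<Rightarrow> 'a \<Rightarrow> real) \<Rightarrow> 's \<Rightarrow> real" where
  "cp \<pi> s = (\<Sum>a\<in>UNIV. \<pi> s a * c s a)"

definition u :: "('s \<Rightarrow> 'a \<Rightarrow> real) \<Rightarrow> nat \<Rightarrow> 's \<Rightarrow> real" where
  "u \<pi> t s = (\<Sum>s'\<in>UNIV. Pn P \<pi> t s s' * cp \<pi> s')"

abbreviation V where "V \<pi> \<equiv> Vf P c \<gamma> \<pi>"
abbreviation Q where "Q \<pi> \<equiv> Qf P c \<gamma> \<pi>"

lemma V_u: "V \<pi> s = (\<Sum>t. \<gamma> ^ t * u \<pi> t s)"
  unfolding Vf_def u_def cp_def ..

lemma u_0: "u \<pi> 0 s = cp \<pi> s"
proof -
  have "\<And>s'. (if s = s' then 1 else 0) * cp \<pi> s' = (if s = s' then cp \<pi> s else 0)" by simp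
  then show ?thesis unfolding u_def by (simp add: sum.delta)
qed

lemma u_Suc: "u \<pi> (Suc t) s = (\<Sum>s''\<in>UNIV. Ppi P \<pi> s s'' * u \<pi> t s'')"
proof -
  have "u \<pi> (Suc t) s = (\<Sum>s'\<in>UNIV. \<Sum>s''\<in>UNIV. Ppi P \<pi> s s'' * Pn P \<pi> t s'' s' * cp \<pi> s')"
    unfolding u_def Pn_alt by (simp add: sum_distrib_right)
  also have "\<dots> = (\<Sum>s''\<in>UNIV. \<Sum>s'\<in>UNIV. Ppi P \<pi> s s'' * Pn P \<pi> t s'' s' * cp \<pi> s')"
    by (rule sum.swap)
  also have "\<dots> = (\<Sum>s''\<in>UNIV. Ppi P \<pi> s s'' * u \<pi> t s'')"
    unfolding u_def by (simp add: sum_distrib_left mult.assoc)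
  finally show ?thesis .
qed

lemma u_bound: "is_policy \<pi> \<Longrightarrow> \<bar>u \<pi> t s\<bar> \<le> (\<Sum>s'\<in>UNIV. \<bar>cp \<pi> s'\<bar>)"
proof -
  assume p: "is_policy \<pi>"
  have "\<bar>u \<pi> t s\<bar> \<le> (\<Sum>s'\<in>UNIV. \<bar>Pn P \<pi> t s s' * cp \<pi> s'\<bar>)"
    unfolding u_def by (rule sum_abs)
  also have "\<dots> \<le> (\<Sum>s'\<in>UNIV. \<bar>cp \<pi> s'\<bar>)"
  proof (rule sum_mono)
    fix s' show "\<bar>Pn P \<pi> t s s' * cp \<pi> s'\<bar> \<le> \<bar>cp \<pi> s'\<bar>"
      using Pn_nonneg[OF p] Pn_le1[OF p]
      by (simp add: abs_mult mult_left_le_one_le)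
  qed
  finally show ?thesis .
qed

lemma summable_V: "is_policy \<pi> \<Longrightarrow> summable (\<lambda>t. \<gamma> ^ t * u \<pi> t s)"
proof -
  assume p: "is_policy \<pi>"
  let ?B = "(\<Sum>s'\<in>UNIV. \<bar>cp \<pi> s'\<bar>)"
  have "summable (\<lambda>t. ?B * \<gamma> ^ t)"
    by (rule summable_mult) (rule summable_geometric, use g0 g1 in simp)
  then show ?thesis
  proof (rule summable_comparison_test')
    fix t :: nat
    have "norm (\<gamma> ^ t * u \<pi> t s) = \<gamma> ^ t * \<bar>u \<pi> t s\<bar>" using g0 by (simp add: abs_mult)
    also have "\<dots> \<le> \<gamma> ^ t * ?B" by (rule mult_left_mono[OF u_bound[OF p]]) (use g0 in simp)
    finally show "norm (\<gamma> ^ t * u \<pi> t s) \<le> ?B * \<gamma> ^ t" by (simp add: mult.commute)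
  qed
qed

lemma bellman: "is_policy \<pi> \<Longrightarrow> V \<pi> s = cp \<pi> s + \<gamma> * (\<Sum>s'\<in>UNIV. Ppi P \<pi> s s' * V \<pi> s')"
proof -
  assume p: "is_policy \<pi>"
  let ?f = "\<lambda>t. \<gamma> ^ t * u \<pi> t s"
  have sf: "summable ?f" by (rule summable_V[OF p])
  have "(\<Sum>t. ?f (Suc t)) = V \<pi> s - cp \<pi> s"
    using suminf_split_head[OF sf] by (simp add: V_u u_0)
  moreover have "(\<Sum>t. ?f (Suc t)) = \<gamma> * (\<Sum>s'\<in>UNIV. Ppi P \<pi> s s' * V \<pi> s')"
  proof -
    have "(\<Sum>t. ?f (Suc t)) = (\<Sum>t. \<gamma> * (\<Sum>s'\<in>UNIV. Ppi P \<pi> s s' * (\<gamma> ^ t * u \<pi> t s')))"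
      by (simp add: u_Suc sum_distrib_left mult.assoc mult.left_commute)
    also have "\<dots> = \<gamma> * (\<Sum>t. (\<Sum>s'\<in>UNIV. Ppi P \<pi> s s' * (\<gamma> ^ t * u \<pi> t s')))"
      by (rule suminf_mult) (intro summable_sum summable_mult summable_V[OF p])
    also have "(\<Sum>t. (\<Sum>s'\<in>UNIV. Ppi P \<pi> s s' * (\<gamma> ^ t * u \<pi> t s'))) =
       (\<Sum>s'\<in>UNIV. (\<Sum>t. Ppi P \<pi> s s' * (\<gamma> ^ t * u \<pi> t s')))"
      by (rule suminf_sum) (intro summable_mult summable_V[OF p])
    also have "\<dots> = (\<Sum>s'\<in>UNIV. Ppi P \<pi> s s' * V \<pi> s')"
      by (intro sum.cong refl) (simp add: suminf_mult summable_V[OF p] V_u)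
    finally show ?thesis .
  qed
  ultimately show ?thesis by simp
qed

lemma wavg_le:
  fixes w D :: "'x::finite \<Rightarrow> real"
  assumes "\<And>x. 0 \<le> w x" "(\<Sum>x\<in>UNIV. w x) = 1" "\<And>x. D x \<le> M"
  shows "(\<Sum>x\<in>UNIV. w x * D x) \<le> M"
proof -
  have "(\<Sum>x\<in>UNIV. w x * D x) \<le> (\<Sum>x\<in>UNIV. w x * M)"
    by (rule sum_mono) (rule mult_left_mono[OF assms(3) assms(1)])
  also have "\<dots> = M" using assms(2) by (simp add: sum_distrib_right[symmetric])
  finally show ?thesis .
qed

lemma wavg_ge:
  fixes w D :: "'x::finite \<Rightarrow> real"
  assumes "\<And>x. 0 \<le> w x" "(\<Sum>x\<in>UNIV. w x) = 1" "\<And>x. M \<le> D x"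
  shows "M \<le> (\<Sum>x\<in>UNIV. w x * D x)"
proof -
  have "M = (\<Sum>x\<in>UNIV. w x * M)" using assms(2) by (simp add: sum_distrib_right[symmetric])
  also have "\<dots> \<le> (\<Sum>x\<in>UNIV. w x * D x)"
    by (rule sum_mono) (rule mult_left_mono[OF assms(3) assms(1)])
  finally show ?thesis .
qed

lemma cmp:
  assumes p: "is_policy \<pi>" and h: "\<And>s. D s \<le> \<gamma> * (\<Sum>s'\<in>UNIV. Ppi P \<pi> s s' * D s') + b"
  shows "D s \<le> b / (1 - \<gamma>)"
proof -
  define M where "M = Max (range D)"
  have DM: "\<And>x. D x \<le> M" unfolding M_def by simp
  have "M \<in> range D" unfolding M_def by (rule Max_in) auto
  then obtain s0 where s0: "D s0 = M" by blast
  have "(\<Sum>s'\<in>UNIV. Ppi P \<pi> s0 s' * D s') \<le> M"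
    by (rule wavg_le[OF Ppi_nonneg[OF p] Ppi_sum[OF p] DM])
  hence "\<gamma> * (\<Sum>s'\<in>UNIV. Ppi P \<pi> s0 s' * D s') \<le> \<gamma> * M" by (rule mult_left_mono) (rule g0)
  hence "M \<le> \<gamma> * M + b" using h[of s0] s0 by linarith
  hence "M * (1 - \<gamma>) \<le> b" by (simp add: algebra_simps)
  hence "M \<le> b / (1 - \<gamma>)" using g1 by (simp add: pos_le_divide_eq)
  thus ?thesis using DM[of s] by linarith
qed

lemma V_le:
  assumes p: "is_policy \<pi>" and h: "\<And>s. cp \<pi> s + \<gamma> * (\<Sum>s'\<in>UNIV. Ppi P \<pi> s s' * W s') \<le> W s"
  shows "V \<pi> s \<le> W s"
proof -
  have "V \<pi> s - W s \<le> 0 / (1 - \<gamma>)"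
  proof (rule cmp[OF p])
    fix s
    have "V \<pi> s - W s \<le> \<gamma> * (\<Sum>s'\<in>UNIV. Ppi P \<pi> s s' * V \<pi> s') - \<gamma> * (\<Sum>s'\<in>UNIV. Ppi P \<pi> s s' * W s')"
      using bellman[OF p, of s] h[of s] by simp
    also have "\<dots> = \<gamma> * (\<Sum>s'\<in>UNIV. Ppi P \<pi> s s' * (V \<pi> s' - W s'))"
      by (simp add: algebra_simps sum_subtractf)
    finally show "V \<pi> s - W s \<le> \<gamma> * (\<Sum>s'\<in>UNIV. Ppi P \<pi> s s' * (V \<pi> s' - W s')) + 0" by simp
  qed
  thus ?thesis by simp
qed

lemma V_ge:
  assumes p: "is_policy \<pi>" and h: "\<And>s. W s \<le> cp \<pi> s + \<gamma> * (\<Sum>s'\<in>UNIV. Ppi P \<pi> s s' * W s')"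
  shows "W s \<le> V \<pi> s"
proof -
  have "W s - V \<pi> s \<le> 0 / (1 - \<gamma>)"
  proof (rule cmp[OF p])
    fix s
    have "W s - V \<pi> s \<le> \<gamma> * (\<Sum>s'\<in>UNIV. Ppi P \<pi> s s' * W s') - \<gamma> * (\<Sum>s'\<in>UNIV. Ppi P \<pi> s s' * V \<pi> s')"
      using bellman[OF p, of s] h[of s] by simp
    also have "\<dots> = \<gamma> * (\<Sum>s'\<in>UNIV. Ppi P \<pi> s s' * (W s' - V \<pi> s'))"
      by (simp add: algebra_simps sum_subtractf)
    finally show "W s - V \<pi> s \<le> \<gamma> * (\<Sum>s'\<in>UNIV. Ppi P \<pi> s s' * (W s' - V \<pi> s')) + 0" by simp
  qed
  thus ?thesis by simp
qed

lemma Q_avg: "(\<Sum>a\<in>UNIV. p a * Qf P c \<gamma> \<pi> s a) =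
   (\<Sum>a\<in>UNIV. p a * c s a) + \<gamma> * (\<Sum>s'\<in>UNIV. (\<Sum>a\<in>UNIV. p a * P s a s') * V \<pi> s')"
proof -
  have "(\<Sum>a\<in>UNIV. p a * Qf P c \<gamma> \<pi> s a) =
     (\<Sum>a\<in>UNIV. p a * c s a) + \<gamma> * (\<Sum>a\<in>UNIV. \<Sum>s'\<in>UNIV. p a * P s a s' * V \<pi> s')"
    unfolding Qf_def by (simp add: algebra_simps sum.distrib sum_distrib_left)
  also have "(\<Sum>a\<in>UNIV. \<Sum>s'\<in>UNIV. p a * P s a s' * V \<pi> s') = (\<Sum>s'\<in>UNIV. \<Sum>a\<in>UNIV. p a * P s a s' * V \<pi> s')"
    by (rule sum.swap)
  also have "\<dots> = (\<Sum>s'\<in>UNIV. (\<Sum>a\<in>UNIV. p a * P s a s') * V \<pi> s')"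
    by (simp add: sum_distrib_right)
  finally show ?thesis .
qed

lemma Q_pol: "(\<Sum>a\<in>UNIV. \<pi>' s a * Q \<pi> s a) = cp \<pi>' s + \<gamma> * (\<Sum>s'\<in>UNIV. Ppi P \<pi>' s s' * V \<pi> s')"
  unfolding Q_avg cp_def Ppi_def ..

lemma Q_self: "is_policy \<pi> \<Longrightarrow> (\<Sum>a\<in>UNIV. \<pi> s a * Q \<pi> s a) = V \<pi> s"
  using Q_pol[of \<pi> s \<pi>] bellman[of \<pi> s] by simp

definition det :: "('s \<Rightarrow> 'a) \<Rightarrow> 's \<Rightarrow> 'a \<Rightarrow> real" where
  "det d = (\<lambda>s a. if a = d s then 1 else 0)"

lemma det_policy: "is_policy (det d)"
  unfolding is_policy_def prob_simplex_def det_def by (simp add: sum.delta')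

lemma det_sum: "(\<Sum>a\<in>UNIV. det d s a * f a) = f (d s)"
proof -
  have "\<And>a. det d s a * f a = (if a = d s then f (d s) else 0)" unfolding det_def by simp
  thus ?thesis by (simp add: sum.delta')
qed

lemma cp_det: "cp (det d) s = c s (d s)" unfolding cp_def by (rule det_sum)
lemma Ppi_det: "Ppi P (det d) s s' = P s (d s) s'" unfolding Ppi_def by (rule det_sum)

lemma bellman_det: "V (det d) s = c s (d s) + \<gamma> * (\<Sum>s'\<in>UNIV. P s (d s) s' * V (det d) s')"
  using bellman[OF det_policy, of d s] by (simp add: cp_det Ppi_det)

definition dopt :: "'s \<Rightarrow> 'a" where
  "dopt = (SOME d. \<forall>d'. (\<Sum>s\<in>UNIV. V (det d) s) \<le> (\<Sum>s\<in>UNIV. V (det d') s))"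

lemma dopt_min: "(\<Sum>s\<in>UNIV. V (det dopt) s) \<le> (\<Sum>s\<in>UNIV. V (det d') s)"
proof -
  define f where "f = (\<lambda>d. (\<Sum>s\<in>UNIV. V (det d) s))"
  have fin: "finite (range f)" by (rule finite_imageI) (rule finite_class.finite_UNIV)
  have ne: "range f \<noteq> {}" by blast
  have "Min (range f) \<in> range f" by (rule Min_in[OF fin ne])
  then obtain d0 where d0: "Min (range f) = f d0" by blast
  have "\<forall>d'. f d0 \<le> f d'" using Min_le[OF fin] d0 by (metis rangeI)
  hence ex: "\<exists>d. \<forall>d'. f d \<le> f d'" by blast
  hence ex': "\<exists>d. \<forall>d'. (\<Sum>s\<in>UNIV. V (det d) s) \<le> (\<Sum>s\<in>UNIV. V (det d') s)"
    unfolding f_def .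
  from someI_ex[OF ex'] show ?thesis unfolding dopt_def by blast
qed

abbreviation Vs where "Vs \<equiv> V (det dopt)"
abbreviation Qs where "Qs \<equiv> Q (det dopt)"

lemma Qs_def': "Qs s a = c s a + \<gamma> * (\<Sum>s'\<in>UNIV. P s a s' * Vs s')"
  unfolding Qf_def ..

lemma Vs_eq: "Vs s = Qs s (dopt s)"
  unfolding Qs_def' by (rule bellman_det)

lemma Vs_le_Qs: "Vs s \<le> Qs s a"
proof (rule ccontr)
  assume "\<not> Vs s \<le> Qs s a"
  hence lt: "Qs s a < Vs s" by simp
  define d' where "d' = dopt(s := a)"
  have h: "c x (d' x) + \<gamma> * (\<Sum>s'\<in>UNIV. P x (d' x) s' * Vs s') \<le> Vs x" for x
  proof (cases "x = s")
    case True thus ?thesis using lt unfolding d'_def Qs_def' by simp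
  next
    case False thus ?thesis using bellman_det[of dopt x] unfolding d'_def by simp
  qed
  have le: "V (det d') x \<le> Vs x" for x
    by (rule V_le[OF det_policy]) (simp add: cp_det Ppi_det h)
  have "V (det d') s = c s a + \<gamma> * (\<Sum>s'\<in>UNIV. P s a s' * V (det d') s')"
    using bellman_det[of d' s] unfolding d'_def by simp
  also have "\<dots> \<le> c s a + \<gamma> * (\<Sum>s'\<in>UNIV. P s a s' * Vs s')"
    by (intro add_left_mono mult_left_mono sum_mono g0 P_nonneg le)
  also have "\<dots> < Vs s" using lt unfolding Qs_def' .
  finally have "V (det d') s < Vs s" .
  hence "(\<Sum>x\<in>UNIV. V (det d') x) < (\<Sum>x\<in>UNIV. Vs x)"
    by (intro sum_strict_mono_ex1) (auto intro: le)
  thus False using dopt_min[of d'] by simp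
qed

lemma Vs_le_V: "is_policy \<pi> \<Longrightarrow> Vs s \<le> V \<pi> s"
proof -
  assume p: "is_policy \<pi>"
  show ?thesis
  proof (rule V_ge[OF p])
    fix s
    have "Vs s \<le> (\<Sum>a\<in>UNIV. \<pi> s a * Qs s a)"
      by (rule wavg_ge) (use p in \<open>auto simp: is_policy_def prob_simplex_def intro: Vs_le_Qs\<close>)
    also have "\<dots> = cp \<pi> s + \<gamma> * (\<Sum>s'\<in>UNIV. Ppi P \<pi> s s' * Vs s')" by (rule Q_pol)
    finally show "Vs s \<le> cp \<pi> s + \<gamma> * (\<Sum>s'\<in>UNIV. Ppi P \<pi> s s' * Vs s')" .
  qed
qed

lemma Q_ge_Qs: "is_policy \<pi> \<Longrightarrow> Qs s a \<le> Q \<pi> s a"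
  unfolding Qf_def
  by (intro add_left_mono mult_left_mono sum_mono g0 P_nonneg Vs_le_V)

definition err :: "('s \<Rightarrow> 'a \<Rightarrow> real) \<Rightarrow> real" where
  "err \<pi> = Max (range (\<lambda>s. V \<pi> s - Vs s))"

lemma err_ge: "V \<pi> s - Vs s \<le> err \<pi>" unfolding err_def by simp

lemma err_nonneg: "is_policy \<pi> \<Longrightarrow> 0 \<le> err \<pi>"
  using err_ge[of \<pi> undefined] Vs_le_V[of \<pi> undefined] by simp

lemma err_attained: "\<exists>s. V \<pi> s - Vs s = err \<pi>"
proof -
  have "err \<pi> \<in> range (\<lambda>s. V \<pi> s - Vs s)" unfolding err_def
    by (rule Max_in) (rule finite_imageI, rule finite_class.finite_UNIV, blast)
  then obtain s where "err \<pi> = V \<pi> s - Vs s" by (rule imageE)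
  thus ?thesis by (intro exI[of _ s]) simp
qed

lemma err_zero: "is_policy \<pi> \<Longrightarrow> err \<pi> = 0 \<Longrightarrow> V \<pi> s = Vs s"
  using err_ge[of \<pi> s] Vs_le_V[of \<pi> s] by simp

lemma Q_le_Qs: "is_policy \<pi> \<Longrightarrow> Q \<pi> s a \<le> Qs s a + \<gamma> * err \<pi>"
proof -
  assume p: "is_policy \<pi>"
  have "Q \<pi> s a - Qs s a = \<gamma> * (\<Sum>s'\<in>UNIV. P s a s' * (V \<pi> s' - Vs s'))"
    unfolding Qf_def by (simp add: algebra_simps sum_subtractf)
  also have "\<dots> \<le> \<gamma> * err \<pi>"
    by (intro mult_left_mono g0 wavg_le P_nonneg P_sum err_ge)
  finally show ?thesis by simp
qed

lemma psum1: "is_policy \<pi> \<Longrightarrow> (\<Sum>a\<in>UNIV. \<pi> s a) = 1"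
  unfolding is_policy_def prob_simplex_def by simp
lemma pnn: "is_policy \<pi> \<Longrightarrow> 0 \<le> \<pi> s a"
  unfolding is_policy_def prob_simplex_def by simp

lemma psi_decomp:
  assumes p: "is_policy \<pi>"
  shows "V \<pi> s - Vs s = (\<Sum>a\<in>UNIV. \<pi> s a * (Qs s a - Vs s))
           + \<gamma> * (\<Sum>s'\<in>UNIV. Ppi P \<pi> s s' * (V \<pi> s' - Vs s'))"
proof -
  have e1: "(\<Sum>a\<in>UNIV. \<pi> s a * (Qs s a - Vs s)) = (\<Sum>a\<in>UNIV. \<pi> s a * Qs s a) - Vs s"
    using psum1[OF p, of s] by (simp add: right_diff_distrib sum_subtractf sum_distrib_right[symmetric])
  have e2: "(\<Sum>a\<in>UNIV. \<pi> s a * Qs s a) = cp \<pi> s + \<gamma> * (\<Sum>s'\<in>UNIV. Ppi P \<pi> s s' * Vs s')"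
    by (rule Q_pol)
  have e3: "(\<Sum>s'\<in>UNIV. Ppi P \<pi> s s' * (V \<pi> s' - Vs s')) =
      (\<Sum>s'\<in>UNIV. Ppi P \<pi> s s' * V \<pi> s') - (\<Sum>s'\<in>UNIV. Ppi P \<pi> s s' * Vs s')"
    by (simp add: right_diff_distrib sum_subtractf)
  show ?thesis unfolding e1 e2 e3 using bellman[OF p, of s] by (simp add: algebra_simps)
qed

lemma opt_support:
  assumes p: "is_policy \<pi>" and h: "\<And>s a. \<pi> s a \<noteq> 0 \<Longrightarrow> Qs s a = Vs s"
  shows "V \<pi> s = Vs s"
proof -
  have z: "(\<Sum>a\<in>UNIV. \<pi> s a * (Qs s a - Vs s)) = 0" for s
    by (rule sum.neutral) (use h in force)
  have "V \<pi> s - Vs s \<le> 0 / (1 - \<gamma>)"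
  proof (rule cmp[OF p])
    fix s show "V \<pi> s - Vs s \<le> \<gamma> * (\<Sum>s'\<in>UNIV. Ppi P \<pi> s s' * (V \<pi> s' - Vs s')) + 0"
      using psi_decomp[OF p, of s] z[of s] by linarith
  qed
  thus ?thesis using Vs_le_V[OF p, of s] by simp
qed

lemma opt_imp_support:
  assumes p: "is_policy \<pi>" and h: "\<And>s. V \<pi> s = Vs s" and q: "Vs s < Qs s a"
  shows "\<pi> s a = 0"
proof -
  have z: "(\<Sum>s'\<in>UNIV. Ppi P \<pi> s s' * (V \<pi> s' - Vs s')) = 0" using h by simp
  have "(\<Sum>a\<in>UNIV. \<pi> s a * (Qs s a - Vs s)) = 0"
    using psi_decomp[OF p, of s] unfolding z h[of s] by simp
  moreover have nn: "\<forall>a\<in>UNIV. 0 \<le> \<pi> s a * (Qs s a - Vs s)"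
    using pnn[OF p] Vs_le_Qs by simp
  ultimately have "\<pi> s a * (Qs s a - Vs s) = 0"
    using sum_nonneg_eq_0_iff[of UNIV "\<lambda>a. \<pi> s a * (Qs s a - Vs s)"] by simp
  thus ?thesis using q by simp
qed

lemma subopt_exists:
  assumes p: "is_policy \<pi>"
  shows "\<exists>s a. 0 < \<pi> s a \<and> (1 - \<gamma>) * err \<pi> \<le> Qs s a - Vs s"
proof -
  obtain s where s: "V \<pi> s - Vs s = err \<pi>" using err_attained by blast
  have "(\<Sum>s'\<in>UNIV. Ppi P \<pi> s s' * (V \<pi> s' - Vs s')) \<le> err \<pi>"
    by (rule wavg_le[OF Ppi_nonneg[OF p] Ppi_sum[OF p] err_ge])
  hence "\<gamma> * (\<Sum>s'\<in>UNIV. Ppi P \<pi> s s' * (V \<pi> s' - Vs s')) \<le> \<gamma> * err \<pi>"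
    by (rule mult_left_mono) (rule g0)
  hence K: "(1 - \<gamma>) * err \<pi> \<le> (\<Sum>a\<in>UNIV. \<pi> s a * (Qs s a - Vs s))"
  proof -
    have "(1 - \<gamma>) * err \<pi> = err \<pi> - \<gamma> * err \<pi>" by (simp add: algebra_simps)
    thus ?thesis using psi_decomp[OF p, of s] s \<open>\<gamma> * _ \<le> \<gamma> * err \<pi>\<close> by linarith
  qed
  show ?thesis
  proof (rule ccontr)
    assume "\<not> ?thesis"
    hence lt: "\<And>a. 0 < \<pi> s a \<Longrightarrow> Qs s a - Vs s < (1 - \<gamma>) * err \<pi>" by force
    have "\<exists>a. 0 < \<pi> s a"
    proof (rule ccontr)
      assume "\<not> (\<exists>a. 0 < \<pi> s a)"
      hence "\<And>a. \<pi> s a = 0" using pnn[OF p, of s] by (metis less_eq_real_def)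
      thus False using psum1[OF p, of s] by simp
    qed
    then obtain a0 where a0: "0 < \<pi> s a0" by blast
    have "(\<Sum>a\<in>UNIV. \<pi> s a * (Qs s a - Vs s)) < (\<Sum>a\<in>UNIV. \<pi> s a * ((1 - \<gamma>) * err \<pi>))"
    proof (rule sum_strict_mono_ex1)
      show "\<forall>a\<in>UNIV. \<pi> s a * (Qs s a - Vs s) \<le> \<pi> s a * ((1 - \<gamma>) * err \<pi>)"
      proof
        fix a
        show "\<pi> s a * (Qs s a - Vs s) \<le> \<pi> s a * ((1 - \<gamma>) * err \<pi>)"
        proof (cases "\<pi> s a = 0")
          case True thus ?thesis by simp
        next
          case False hence "0 < \<pi> s a" using pnn[OF p, of s a] by simp
          thus ?thesis using lt[of a] by (intro mult_left_mono) auto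
        qed
      qed
      show "\<exists>a\<in>UNIV. \<pi> s a * (Qs s a - Vs s) < \<pi> s a * ((1 - \<gamma>) * err \<pi>)"
        using a0 lt[OF a0] by (intro bexI[of _ a0]) (auto intro: mult_strict_left_mono)
    qed simp
    also have "\<dots> = (1 - \<gamma>) * err \<pi>" using psum1[OF p, of s] by (simp add: sum_distrib_right[symmetric])
    finally show False using K by simp
  qed
qed

definition minQ where "minQ \<pi> s = Min (range (Q \<pi> s))"

lemma minQ_le: "minQ \<pi> s \<le> Q \<pi> s a" unfolding minQ_def by simp

lemma minQ_attained: "\<exists>a. Q \<pi> s a = minQ \<pi> s"
proof -
  have "minQ \<pi> s \<in> range (Q \<pi> s)" unfolding minQ_def
    by (rule Min_in) (rule finite_imageI, rule finite_class.finite_UNIV, blast)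
  then obtain a where "minQ \<pi> s = Q \<pi> s a" by (rule imageE)
  thus ?thesis by (intro exI[of _ a]) simp
qed

lemma minQ_ge: "(\<And>a. x \<le> Q \<pi> s a) \<Longrightarrow> x \<le> minQ \<pi> s"
  using minQ_attained[of \<pi> s] by metis

lemma simplex_avg_ge: "prob_simplex p \<Longrightarrow> minQ \<pi> s \<le> (\<Sum>a\<in>UNIV. Q \<pi> s a * p a)"
proof -
  assume "prob_simplex p"
  hence "minQ \<pi> s \<le> (\<Sum>a\<in>UNIV. p a * Q \<pi> s a)"
    unfolding prob_simplex_def by (intro wavg_ge minQ_le) auto
  thus ?thesis by (simp add: mult.commute)
qed

definition vert :: "'a \<Rightarrow> 'a \<Rightarrow> real" where "vert a = (\<lambda>b. if b = a then 1 else 0)"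

lemma vert_simplex: "prob_simplex (vert a)"
  unfolding prob_simplex_def vert_def by (simp add: sum.delta')

lemma vert_sum: "(\<Sum>b\<in>UNIV. f b * vert a b) = f a"
proof -
  have "\<And>b. f b * vert a b = (if b = a then f a else 0)" unfolding vert_def by simp
  thus ?thesis by (simp add: sum.delta')
qed

lemma gap_eq: "gap P c \<gamma> \<pi> s = V \<pi> s - minQ \<pi> s"
proof -
  obtain a where a: "Q \<pi> s a = minQ \<pi> s" using minQ_attained by blast
  let ?X = "{- adv P c \<gamma> \<pi> s p | p. prob_simplex p}"
  have "V \<pi> s - minQ \<pi> s = - adv P c \<gamma> \<pi> s (vert a)"
    unfolding adv_def vert_sum a by simp
  hence mem: "V \<pi> s - minQ \<pi> s \<in> ?X"
    using vert_simplex[of a] by blast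
  have ub: "\<And>x. x \<in> ?X \<Longrightarrow> x \<le> V \<pi> s - minQ \<pi> s"
    unfolding adv_def using simplex_avg_ge by force
  have "Sup ?X = V \<pi> s - minQ \<pi> s" by (rule cSup_eq_maximum[OF mem ub])
  thus ?thesis unfolding gap_def .
qed

lemma gap_nonneg: "is_policy \<pi> \<Longrightarrow> 0 \<le> gap P c \<gamma> \<pi> s"
  unfolding gap_eq using Q_self[of \<pi> s] simplex_avg_ge[of "\<pi> s" \<pi> s]
  by (simp add: is_policy_def mult.commute)

lemma gap_le_err: "is_policy \<pi> \<Longrightarrow> gap P c \<gamma> \<pi> s \<le> err \<pi>"
proof -
  assume p: "is_policy \<pi>"
  have "Vs s \<le> minQ \<pi> s"
    by (rule minQ_ge) (meson Vs_le_Qs Q_ge_Qs[OF p] order_trans)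
  thus ?thesis unfolding gap_eq using err_ge[of \<pi> s] by simp
qed

lemma gap_zero_opt: "is_policy \<pi> \<Longrightarrow> (\<And>s. gap P c \<gamma> \<pi> s = 0) \<Longrightarrow> err \<pi> = 0"
proof -
  assume p: "is_policy \<pi>" and z: "\<And>s. gap P c \<gamma> \<pi> s = 0"
  have "V \<pi> s \<le> Vs s" for s
  proof (rule V_ge[OF det_policy])
    fix s
    have "V \<pi> s = minQ \<pi> s" using z[of s] unfolding gap_eq by simp
    also have "\<dots> \<le> Q \<pi> s (dopt s)" by (rule minQ_le)
    also have "\<dots> = cp (det dopt) s + \<gamma> * (\<Sum>s'\<in>UNIV. Ppi P (det dopt) s s' * V \<pi> s')"
      unfolding Qf_def cp_det Ppi_det ..
    finally show "V \<pi> s \<le> cp (det dopt) s + \<gamma> * (\<Sum>s'\<in>UNIV. Ppi P (det dopt) s s' * V \<pi> s')" .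
  qed
  moreover obtain s0 where "V \<pi> s0 - Vs s0 = err \<pi>" using err_attained by blast
  ultimately have "err \<pi> \<le> 0" by (metis diff_le_0_iff_le)
  thus ?thesis using err_nonneg[OF p] by simp
qed

definition DeltaP where "DeltaP \<pi> = (1 / (1 - \<gamma>)) * Max (range (gap P c \<gamma> \<pi>))"

lemma Delta_eq: "Delta P c \<gamma> pis j = DeltaP (pis j)"
  unfolding Delta_def DeltaP_def ..

lemma DeltaP_nonneg: "is_policy \<pi> \<Longrightarrow> 0 \<le> DeltaP \<pi>"
proof -
  assume p: "is_policy \<pi>"
  have "0 \<le> Max (range (gap P c \<gamma> \<pi>))"
  proof -
    have "gap P c \<gamma> \<pi> undefined \<le> Max (range (gap P c \<gamma> \<pi>))"
      by (rule Max_ge) (rule finite_imageI, rule finite_class.finite_UNIV, rule rangeI)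
    thus ?thesis using gap_nonneg[OF p, of undefined] by linarith
  qed
  thus ?thesis unfolding DeltaP_def using g1 by simp
qed

lemma DeltaP_le: "is_policy \<pi> \<Longrightarrow> DeltaP \<pi> \<le> err \<pi> / (1 - \<gamma>)"
proof -
  assume p: "is_policy \<pi>"
  have "Max (range (gap P c \<gamma> \<pi>)) \<le> err \<pi>"
    using gap_le_err[OF p] by (simp add: Max_le_iff)
  thus ?thesis unfolding DeltaP_def using g1 by (simp add: divide_right_mono)
qed

lemma DeltaP_zero: "is_policy \<pi> \<Longrightarrow> DeltaP \<pi> = 0 \<Longrightarrow> err \<pi> = 0"
proof -
  assume p: "is_policy \<pi>" and z: "DeltaP \<pi> = 0"
  have "Max (range (gap P c \<gamma> \<pi>)) = 0" using z g1 unfolding DeltaP_def by simp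
  moreover have "gap P c \<gamma> \<pi> s \<le> Max (range (gap P c \<gamma> \<pi>))" for s
    by (rule Max_ge) (rule finite_imageI, rule finite_class.finite_UNIV, rule rangeI)
  ultimately have "\<And>s. gap P c \<gamma> \<pi> s \<le> 0" by simp
  hence "\<And>s. gap P c \<gamma> \<pi> s = 0" using gap_nonneg[OF p] by (meson order_antisym)
  thus ?thesis by (rule gap_zero_opt[OF p])
qed

end

locale pmd = mdp P c \<gamma> for P :: "'s::finite \<Rightarrow> 'a::finite \<Rightarrow> 's \<Rightarrow> real" and c \<gamma> +
  fixes pis :: "nat \<Rightarrow> 's \<Rightarrow> 'a \<Rightarrow> real" and NT :: nat and Tn :: nat
  assumes seq: "is_pmd_sequence P c \<gamma> pis"
    and Tn_def: "Tn = T_param \<gamma> CARD('s) CARD('a)"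
    and NT_def: "NT = N_param \<gamma> * Tn"
begin

abbreviation \<eta> where "\<eta> t \<equiv> step_size P c \<gamma> pis t"
abbreviation e where "e t \<equiv> err (pis t)"

lemma pol: "is_policy (pis t)"
proof (cases t)
  case 0 thus ?thesis using seq unfolding is_pmd_sequence_def by simp
next
  case (Suc n) thus ?thesis using seq unfolding is_pmd_sequence_def is_policy_def by simp
qed

lemma pol_simplex: "prob_simplex (pis t s)"
  using pol[of t] unfolding is_policy_def by simp

lemma step_min: "prob_simplex p \<Longrightarrow>
  gobj (\<eta> t) (Q (pis t) s) (pis t s) (pis (Suc t) s) \<le> gobj (\<eta> t) (Q (pis t) s) (pis t s) p"
  using seq unfolding is_pmd_sequence_def pmd_obj_def gobj_def by blast

lemma eta_eq: "\<eta> t = 2 ^ (t + 1) / DeltaP (pis (NT * (t div NT)))"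
  unfolding step_size_def Let_def Delta_eq NT_def Tn_def ..

lemma eta_nonneg: "0 \<le> \<eta> t"
  unfolding eta_eq using DeltaP_nonneg[OF pol] by simp

lemma V_mono: "V (pis (Suc t)) s \<le> V (pis t) s"
proof (rule V_le[OF pol])
  fix s
  have "(\<Sum>a\<in>UNIV. Q (pis t) s a * pis (Suc t) s a) \<le> (\<Sum>a\<in>UNIV. Q (pis t) s a * pis t s a)"
    by (rule gstep_le_self[OF eta_nonneg pol_simplex step_min[OF pol_simplex]])
  also have "\<dots> = V (pis t) s" using Q_self[OF pol, of t s] by (simp add: mult.commute)
  finally have "(\<Sum>a\<in>UNIV. pis (Suc t) s a * Q (pis t) s a) \<le> V (pis t) s" by (simp add: mult.commute)
  thus "cp (pis (Suc t)) s + \<gamma> * (\<Sum>s'\<in>UNIV. Ppi P (pis (Suc t)) s s' * V (pis t) s') \<le> V (pis t) s"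
    unfolding Q_pol .
qed

lemma e_Suc: "e (Suc t) \<le> e t"
proof -
  obtain s where "V (pis (Suc t)) s - Vs s = e (Suc t)" using err_attained by blast
  moreover have "V (pis t) s - Vs s \<le> e t" by (rule err_ge)
  ultimately show ?thesis using V_mono[of t s] by linarith
qed

lemma e_mono: "t \<le> t' \<Longrightarrow> e t' \<le> e t"
  by (rule lift_Suc_antimono_le[of e]) (rule e_Suc)

lemma e_nonneg: "0 \<le> e t" by (rule err_nonneg[OF pol])

lemma e_rec: "0 < \<eta> t \<Longrightarrow> e (Suc t) \<le> \<gamma> * e t + 1 / \<eta> t"
proof -
  assume ep: "0 < \<eta> t"
  have "V (pis (Suc t)) s - Vs s \<le> \<gamma> * e t + 1 / \<eta> t" for s
  proof -
    have "V (pis (Suc t)) s = cp (pis (Suc t)) s + \<gamma> * (\<Sum>s'\<in>UNIV. Ppi P (pis (Suc t)) s s' * V (pis (Suc t)) s')"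
      by (rule bellman[OF pol])
    also have "\<dots> \<le> cp (pis (Suc t)) s + \<gamma> * (\<Sum>s'\<in>UNIV. Ppi P (pis (Suc t)) s s' * V (pis t) s')"
      by (intro add_left_mono mult_left_mono g0 sum_mono Ppi_nonneg[OF pol] V_mono)
    also have "\<dots> = (\<Sum>a\<in>UNIV. pis (Suc t) s a * Q (pis t) s a)" by (rule Q_pol[symmetric])
    also have "\<dots> = (\<Sum>a\<in>UNIV. Q (pis t) s a * pis (Suc t) s a)" by (simp add: mult.commute)
    also have "\<dots> \<le> Q (pis t) s (dopt s) + 1 / \<eta> t"
      by (rule gstep_approx[OF ep pol_simplex step_min]) (rule vert_simplex[unfolded vert_def])
    also have "\<dots> \<le> Qs s (dopt s) + \<gamma> * e t + 1 / \<eta> t" using Q_le_Qs[OF pol] by simp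
    finally show ?thesis using Vs_eq[of s] by simp
  qed
  moreover obtain s where "V (pis (Suc t)) s - Vs s = e (Suc t)" using err_attained by blast
  ultimately show ?thesis by metis
qed


abbreviation Nn where "Nn \<equiv> N_param \<gamma>"

lemma N_real: "4 / (1 - \<gamma>) \<le> real Nn"
  unfolding N_param_def by (rule real_nat_ceiling_ge)

lemma N_ge: "4 \<le> Nn"
proof -
  have "4 \<le> 4 / (1 - \<gamma>)" using g0 g1 by (simp add: le_divide_eq)
  thus ?thesis using N_real by linarith
qed

lemma T_ge: "1 \<le> Tn" unfolding Tn_def T_param_def by simp

lemma NT_eq: "NT = Nn * Tn" by (rule NT_def)

lemma NT_ge: "4 * Tn \<le> NT" unfolding NT_eq using N_ge by simp

lemma NT_pos: "0 < NT" using NT_ge T_ge by linarith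

lemma T_big:
  assumes A2: "2 \<le> CARD('a)"
  shows "4 \<le> 2 ^ Tn * (1 - \<gamma>)^2"
proof -
  define x where "x = real CARD('s) ^ 3 * real CARD('a) / (1 - \<gamma>)^2"
  define L where "L = nat \<lceil>log 2 x\<rceil>"
  have TL: "Tn = L + 1" unfolding Tn_def T_param_def L_def x_def ..
  have S1: "1 \<le> real CARD('s)" by (simp add: Suc_le_eq)
  have "1 \<le> real CARD('s) ^ 3" using S1 by simp
  hence num: "2 \<le> real CARD('s) ^ 3 * real CARD('a)"
  proof -
    have "2 \<le> real CARD('a)" using A2 by simp
    hence "2 * 1 \<le> real CARD('a) * real CARD('s) ^ 3"
      using \<open>1 \<le> real CARD('s) ^ 3\<close> by (intro mult_mono) auto
    thus ?thesis by (simp add: mult.commute)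
  qed
  have gp: "0 < (1 - \<gamma>)^2" using g1 by simp
  have x2: "2 / (1 - \<gamma>)^2 \<le> x" unfolding x_def using num gp by (simp add: divide_right_mono)
  have xpos: "0 < x" using x2 gp by (smt (verit) divide_pos_pos)
  have "log 2 x \<le> real L" unfolding L_def by linarith
  hence "2 powr (log 2 x) \<le> 2 powr (real L)" by (rule powr_mono) simp
  hence "x \<le> 2 ^ L" using xpos by (simp add: powr_realpow)
  hence "2 / (1 - \<gamma>)^2 \<le> 2 ^ L" using x2 by linarith
  hence "2 \<le> 2 ^ L * (1 - \<gamma>)^2" using gp by (simp add: divide_le_eq)
  thus ?thesis unfolding TL by simp
qed

lemma gN: "\<gamma> ^ (Nn - 2) \<le> 1 / 2"
proof -
  define k where "k = Nn - 2"
  have kr: "real k = real Nn - 2" unfolding k_def using N_ge by simp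
  have "2 \<le> 2 / (1 - \<gamma>)" using g0 g1 by (simp add: le_divide_eq)
  hence "2 / (1 - \<gamma>) \<le> real k" using N_real kr
    by (smt (verit, ccfv_SIG) add_divide_distrib field_sum_of_halves)
  hence "1 / (1 - \<gamma>) \<le> real k" using g1 by (smt (verit) divide_right_mono)
  hence k1: "1 \<le> real k * (1 - \<gamma>)" using g1 by (simp add: divide_le_eq)
  have "\<gamma> \<le> exp (\<gamma> - 1)" using exp_ge_add_one_self[of "\<gamma> - 1"] by simp
  hence "\<gamma> ^ k \<le> exp (\<gamma> - 1) ^ k" by (rule power_mono) (rule g0)
  also have "\<dots> = exp (real k * (\<gamma> - 1))" by (rule exp_of_nat_mult[symmetric])
  also have "\<dots> \<le> exp (-1)" using k1 by (simp add: algebra_simps)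
  also have "\<dots> \<le> 1 / 2"
  proof -
    have "2 \<le> exp (1::real)" using exp_ge_add_one_self[of 1] by simp
    thus ?thesis by (simp add: exp_minus' divide_le_eq)
  qed
  finally show ?thesis unfolding k_def .
qed


lemma blk: "k * NT \<le> t \<Longrightarrow> k * NT \<le> NT * (t div NT) \<and> NT * (t div NT) \<le> t"
proof -
  assume h: "k * NT \<le> t"
  have "k * NT div NT \<le> t div NT" by (rule div_le_mono[OF h])
  hence "k \<le> t div NT" using NT_pos by simp
  hence "k * NT \<le> NT * (t div NT)" by (simp add: mult.commute)
  moreover have "NT * (t div NT) \<le> t" by (metis mult.commute div_times_less_eq_dividend)
  ultimately show ?thesis by simp
qed

lemma eta_bound:
  assumes j: "k * NT \<le> t" and et: "0 < e t"
  shows "0 < \<eta> t \<and> 1 / \<eta> t \<le> e (k * NT) / ((1 - \<gamma>) * 2 ^ (t + 1))"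
proof -
  define b where "b = NT * (t div NT)"
  have b: "k * NT \<le> b" "b \<le> t" using blk[OF j] unfolding b_def by auto
  have eb: "e t \<le> e b" "e b \<le> e (k * NT)" using e_mono b by auto
  have "DeltaP (pis b) \<noteq> 0" using DeltaP_zero[OF pol, of b] eb et by auto
  hence D: "0 < DeltaP (pis b)" using DeltaP_nonneg[OF pol, of b] by simp
  have eta: "\<eta> t = 2 ^ (t + 1) / DeltaP (pis b)" unfolding eta_eq b_def ..
  have pos: "0 < \<eta> t" unfolding eta using D by simp
  have "1 / \<eta> t = DeltaP (pis b) / 2 ^ (t + 1)" unfolding eta by simp
  also have "\<dots> \<le> (e b / (1 - \<gamma>)) / 2 ^ (t + 1)"
    by (rule divide_right_mono[OF DeltaP_le[OF pol]]) simp
  also have "\<dots> \<le> (e (k * NT) / (1 - \<gamma>)) / 2 ^ (t + 1)"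
    using eb g1 by (intro divide_right_mono) auto
  also have "\<dots> = e (k * NT) / ((1 - \<gamma>) * 2 ^ (t + 1))" by simp
  finally show ?thesis using pos by simp
qed

lemma e_rec_blk:
  assumes j: "k * NT \<le> t"
  shows "e (Suc t) \<le> \<gamma> * e t + e (k * NT) / ((1 - \<gamma>) * 2 ^ (t + 1))"
proof (cases "e t = 0")
  case True
  have "0 \<le> e (k * NT) / ((1 - \<gamma>) * 2 ^ (t + 1))" using e_nonneg g1 by simp
  thus ?thesis using e_Suc[of t] True by simp
next
  case False
  hence "0 < e t" using e_nonneg[of t] by simp
  from eta_bound[OF j this] e_rec[of t] show ?thesis by force
qed

lemma conv:
  assumes A2: "2 \<le> CARD('a)"
  shows "e (k * NT + 2 * Tn - 1 + n) \<le> \<gamma> ^ n * e (k * NT) + (1 - \<gamma>)^2 * e (k * NT) / 16"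
proof (induction n)
  case 0
  have "e (k * NT + 2 * Tn - 1) \<le> e (k * NT)" by (rule e_mono) (use T_ge in simp)
  moreover have "0 \<le> (1 - \<gamma>)^2 * e (k * NT) / 16" using e_nonneg by simp
  ultimately show ?case by simp
next
  case (Suc n)
  define t where "t = k * NT + 2 * Tn - 1 + n"
  define ej where "ej = e (k * NT)"
  have ej0: "0 \<le> ej" unfolding ej_def by (rule e_nonneg)
  have j: "k * NT \<le> t" unfolding t_def using T_ge by simp
  have gp: "0 < 1 - \<gamma>" using g1 by simp
  define X where "X = 2 ^ Tn * (1 - \<gamma>)^2"
  have X4: "4 \<le> X" unfolding X_def by (rule T_big[OF A2])
  have "2 * Tn \<le> t + 1" unfolding t_def using T_ge by simp
  hence "(2::real) ^ (2 * Tn) \<le> 2 ^ (t + 1)" by (rule power_increasing) simp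
  hence le2: "2 ^ (2 * Tn) * (1 - \<gamma>)^4 \<le> 2 ^ (t + 1) * (1 - \<gamma>)^4"
    by (rule mult_right_mono) simp
  have "X ^ 2 = (2 ^ Tn) ^ 2 * ((1 - \<gamma>)^2)^2" unfolding X_def by (rule power_mult_distrib)
  also have "\<dots> = 2 ^ (2 * Tn) * (1 - \<gamma>)^4" by (simp add: power_mult[symmetric] mult.commute)
  finally have "X ^ 2 \<le> 2 ^ (t + 1) * (1 - \<gamma>)^4" using le2 by simp
  moreover have "16 \<le> X ^ 2"
  proof -
    have "4 * 4 \<le> X * X" using X4 by (intro mult_mono) auto
    thus ?thesis by (simp add: power2_eq_square)
  qed
  ultimately have big: "16 \<le> 2 ^ (t + 1) * (1 - \<gamma>)^4" by linarith
  have "ej / ((1 - \<gamma>) * 2 ^ (t + 1)) \<le> (1 - \<gamma>)^3 * ej / 16"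
  proof -
    have "ej * 16 \<le> ej * (2 ^ (t + 1) * (1 - \<gamma>)^4)" by (rule mult_left_mono[OF big ej0])
    hence "ej * 16 \<le> (1 - \<gamma>)^3 * ej * ((1 - \<gamma>) * 2 ^ (t + 1))"
      by (simp add: power_Suc algebra_simps power_numeral_reduce)
    thus ?thesis using gp by (simp add: divide_le_eq le_divide_eq mult.commute mult.left_commute)
  qed
  hence "e (Suc t) \<le> \<gamma> * e t + (1 - \<gamma>)^3 * ej / 16" using e_rec_blk[OF j] unfolding ej_def by linarith
  also have "\<dots> \<le> \<gamma> * (\<gamma> ^ n * ej + (1 - \<gamma>)^2 * ej / 16) + (1 - \<gamma>)^3 * ej / 16"
    using Suc.IH g0 unfolding t_def ej_def by (simp add: mult_left_mono)
  also have "\<dots> = \<gamma> ^ Suc n * ej + (1 - \<gamma>)^2 * ej / 16"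
  proof -
    have "(1 - \<gamma>)^3 * ej / 16 = (1 - \<gamma>)^2 * ej / 16 - \<gamma> * ((1 - \<gamma>)^2 * ej / 16)"
      by (simp add: field_simps power2_eq_square power3_eq_cube)
    moreover have "\<gamma> * (\<gamma> ^ n * ej) = \<gamma> ^ Suc n * ej" by simp
    ultimately show ?thesis by (simp only: distrib_left)
  qed
  finally show ?case unfolding t_def ej_def by simp
qed


lemma e_small:
  assumes A2: "2 \<le> CARD('a)" and m: "k * NT + NT - 1 \<le> m"
  shows "e m \<le> (1 - \<gamma>) * e (k * NT) / 2"
proof -
  define ej where "ej = e (k * NT)"
  have ej0: "0 \<le> ej" unfolding ej_def by (rule e_nonneg)
  define n where "n = m - (k * NT + 2 * Tn - 1)"
  have NT4: "4 * Tn \<le> NT" by (rule NT_ge)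
  have meq: "m = k * NT + 2 * Tn - 1 + n" unfolding n_def using m NT4 T_ge by simp
  have "NT - 2 * Tn \<le> n" unfolding n_def using m NT4 T_ge by simp
  moreover have "NT - 2 * Tn = (Nn - 2) * Tn" unfolding NT_eq by (simp add: diff_mult_distrib)
  ultimately have nge: "(Nn - 2) * Tn \<le> n" by simp
  have "\<gamma> ^ n \<le> \<gamma> ^ ((Nn - 2) * Tn)" by (rule power_decreasing[OF nge g0]) (use g1 in simp)
  also have "\<dots> = (\<gamma> ^ (Nn - 2)) ^ Tn" by (rule power_mult)
  also have "\<dots> \<le> (1 / 2) ^ Tn" by (rule power_mono[OF gN]) (use g0 in simp)
  also have "\<dots> \<le> (1 - \<gamma>)^2 / 4"
  proof -
    have "4 \<le> 2 ^ Tn * (1 - \<gamma>)^2" by (rule T_big[OF A2])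
    thus ?thesis by (simp add: power_one_over field_simps)
  qed
  finally have gn: "\<gamma> ^ n \<le> (1 - \<gamma>)^2 / 4" .
  have "e m \<le> \<gamma> ^ n * ej + (1 - \<gamma>)^2 * ej / 16" unfolding meq ej_def by (rule conv[OF A2])
  also have "\<gamma> ^ n * ej \<le> (1 - \<gamma>)^2 / 4 * ej" by (rule mult_right_mono[OF gn ej0])
  finally have a: "e m \<le> (1 - \<gamma>)^2 * ej / 4 + (1 - \<gamma>)^2 * ej / 16" by simp
  have "(1 - \<gamma>)^2 \<le> 1 - \<gamma>" using g0 g1 by (simp add: power2_eq_square mult_left_le_one_le)
  hence "(1 - \<gamma>)^2 * ej \<le> (1 - \<gamma>) * ej" by (rule mult_right_mono[OF _ ej0])
  moreover have "0 \<le> (1 - \<gamma>)^2 * ej" using ej0 by simp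
  ultimately show ?thesis using a unfolding ej_def by linarith
qed

lemma elim:
  assumes ej: "0 < e (k * NT)"
  shows "\<exists>s0 a0. 0 < pis (k * NT) s0 a0 \<and> Vs s0 < Qs s0 a0 \<and>
            (\<forall>m\<ge>k * NT + NT. pis m s0 a0 = 0)"
proof -
  obtain s0 a0 where pa: "0 < pis (k * NT) s0 a0" and qa: "(1 - \<gamma>) * e (k * NT) \<le> Qs s0 a0 - Vs s0"
    using subopt_exists[OF pol] by blast
  have gp: "0 < 1 - \<gamma>" using g1 by simp
  have "0 < (1 - \<gamma>) * e (k * NT)" using ej gp by simp
  hence sub: "Vs s0 < Qs s0 a0" using qa by simp
  have "a0 \<noteq> dopt s0" using sub Vs_eq[of s0] by auto
  hence "card {a0, dopt s0} = 2" by simp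
  moreover have "card {a0, dopt s0} \<le> CARD('a)" by (rule card_mono) auto
  ultimately have A2: "2 \<le> CARD('a)" by simp
  have "pis (Suc m) s0 a0 = 0" if m: "k * NT + NT - 1 \<le> m" for m
  proof (cases "e m = 0")
    case True
    hence "e (Suc m) = 0" using e_Suc[of m] e_nonneg[of "Suc m"] by simp
    hence "\<And>s. V (pis (Suc m)) s = Vs s" by (rule err_zero[OF pol])
    thus ?thesis by (rule opt_imp_support[OF pol _ sub])
  next
    case False
    hence em: "0 < e m" using e_nonneg[of m] by simp
    define ej where "ej = e (k * NT)"
    have km: "k * NT \<le> m" using m NT_pos by simp
    from eta_bound[OF km em] have ep: "0 < \<eta> m" and eb: "1 / \<eta> m \<le> ej / ((1 - \<gamma>) * 2 ^ (m + 1))"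
      unfolding ej_def by auto
    have ejp: "0 < ej" unfolding ej_def by (rule ej)
    have "(1 - \<gamma>) * 2 ^ (m + 1) \<le> \<eta> m * ej"
    proof -
      have pos2: "0 < (1 - \<gamma>) * 2 ^ (m + 1)" using gp by simp
      from eb have "1 \<le> \<eta> m * (ej / ((1 - \<gamma>) * 2 ^ (m + 1)))" using ep
        by (simp add: divide_le_eq mult.commute)
      thus ?thesis using pos2 by (simp add: le_divide_eq mult.commute mult.left_commute)
    qed
    hence eta_ej: "(1 - \<gamma>) * 2 ^ (m + 1) \<le> \<eta> m * ej" .
    have small: "e m \<le> (1 - \<gamma>) * ej / 2" unfolding ej_def by (rule e_small[OF A2 m])
    have q1: "Qs s0 a0 \<le> Q (pis m) s0 a0" by (rule Q_ge_Qs[OF pol])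
    have q2: "Q (pis m) s0 (dopt s0) \<le> Vs s0 + \<gamma> * e m" using Q_le_Qs[OF pol, of m s0 "dopt s0"] Vs_eq[of s0] by simp
    have "\<gamma> * e m \<le> e m" using g0 g1 e_nonneg[of m] by (intro mult_left_le_one_le) auto
    hence diff: "(1 - \<gamma>) * ej / 2 \<le> Q (pis m) s0 a0 - Q (pis m) s0 (dopt s0)"
      using q1 q2 qa small unfolding ej_def by linarith
    have "\<eta> m * ((1 - \<gamma>) * ej / 2) \<le> \<eta> m * (Q (pis m) s0 a0 - Q (pis m) s0 (dopt s0))"
      by (rule mult_left_mono[OF diff]) (use ep in simp)
    moreover have "2 \<le> \<eta> m * ((1 - \<gamma>) * ej / 2)"
    proof -
      have "Tn \<le> m" using m NT_ge T_ge by simp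
      hence "(2::real) ^ Tn \<le> 2 ^ m" by (rule power_increasing) simp
      hence "2 ^ Tn * (1 - \<gamma>)^2 \<le> 2 ^ m * (1 - \<gamma>)^2" by (rule mult_right_mono) simp
      hence "4 \<le> 2 ^ m * (1 - \<gamma>)^2" using T_big[OF A2] by linarith
      moreover have "(1 - \<gamma>) * 2 ^ (m + 1) * (1 - \<gamma>) \<le> \<eta> m * ej * (1 - \<gamma>)"
        by (rule mult_right_mono[OF eta_ej]) (use gp in simp)
      moreover have "(1 - \<gamma>) * 2 ^ (m + 1) * (1 - \<gamma>) = 2 * (2 ^ m * (1 - \<gamma>)^2)"
        by (simp add: power2_eq_square algebra_simps)
      moreover have "\<eta> m * ((1 - \<gamma>) * ej / 2) = \<eta> m * ej * (1 - \<gamma>) / 2" by simp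
      ultimately show ?thesis by linarith
    qed
    ultimately have big: "2 \<le> \<eta> m * (Q (pis m) s0 a0 - Q (pis m) s0 (dopt s0))" by linarith
    show ?thesis
      by (rule gstep_elim[OF pol_simplex pol_simplex step_min big])
  qed
  hence "\<forall>m\<ge>k * NT + NT. pis m s0 a0 = 0"
  proof (intro allI impI)
    fix m' assume h: "k * NT + NT \<le> m'"
    then obtain m where "m' = Suc m" using NT_pos by (cases m') auto
    moreover have "k * NT + NT - 1 \<le> m" using h calculation by simp
    ultimately show "pis m' s0 a0 = 0" using \<open>\<And>m. k * NT + NT - 1 \<le> m \<Longrightarrow> pis (Suc m) s0 a0 = 0\<close> by simp
  qed
  thus ?thesis using pa sub by blast
qed


definition Sub :: "('s \<times> 'a) set" where "Sub = {x. Vs (fst x) < Qs (fst x) (snd x)}"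
definition Elim :: "nat \<Rightarrow> ('s \<times> 'a) set" where
  "Elim t = {x \<in> Sub. \<forall>m\<ge>t. pis m (fst x) (snd x) = 0}"

lemma card_Sub: "card Sub \<le> CARD('s) * (CARD('a) - 1)"
proof -
  define R where "R = range (\<lambda>s. (s, dopt s))"
  have "Sub \<subseteq> UNIV - R" unfolding Sub_def R_def using Vs_eq by auto
  hence "card Sub \<le> card (UNIV - R)" by (intro card_mono) auto
  also have "card (UNIV - R) = card (UNIV :: ('s \<times> 'a) set) - card R"
    by (rule card_Diff_subset) auto
  also have "card R = CARD('s)" unfolding R_def by (rule card_image) (auto simp: inj_on_def)
  also have "card (UNIV :: ('s \<times> 'a) set) = CARD('s) * CARD('a)"
    by (simp add: card_cartesian_product flip: UNIV_Times_UNIV)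
  also have "CARD('s) * CARD('a) - CARD('s) = CARD('s) * (CARD('a) - 1)" by (simp add: diff_mult_distrib2)
  finally show ?thesis .
qed

lemma Elim_mono: "t \<le> t' \<Longrightarrow> Elim t \<subseteq> Elim t'"
  unfolding Elim_def by auto

lemma count: "e (k * NT) = 0 \<or> k \<le> card (Elim (k * NT))"
proof (induction k)
  case 0 thus ?case by simp
next
  case (Suc k)
  show ?case
  proof (cases "e (k * NT) = 0")
    case True
    have "e (Suc k * NT) \<le> e (k * NT)" by (rule e_mono) simp
    hence "e (Suc k * NT) = 0" using True e_nonneg[of "Suc k * NT"] by simp
    thus ?thesis by simp
  next
    case False
    hence kc: "k \<le> card (Elim (k * NT))" using Suc.IH by simp
    have "0 < e (k * NT)" using False e_nonneg[of "k * NT"] by simp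
    from elim[OF this] obtain s0 a0 where h: "0 < pis (k * NT) s0 a0" "Vs s0 < Qs s0 a0"
      "\<forall>m\<ge>k * NT + NT. pis m s0 a0 = 0" by blast
    have nin: "(s0, a0) \<notin> Elim (k * NT)" unfolding Elim_def using h(1) by auto
    have inn: "(s0, a0) \<in> Elim (Suc k * NT)" unfolding Elim_def Sub_def using h(2,3) by (simp add: add.commute)
    have "Elim (k * NT) \<subset> Elim (Suc k * NT)" using Elim_mono[of "k * NT" "Suc k * NT"] nin inn by auto
    hence "card (Elim (k * NT)) < card (Elim (Suc k * NT))" by (rule psubset_card_mono[rotated]) simp
    thus ?thesis using kc by simp
  qed
qed

lemma final_opt:
  assumes "CARD('s) * (CARD('a) - 1) * NT \<le> \<tau>"
  shows "V (pis \<tau>) s = Vs s"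
proof -
  define K where "K = CARD('s) * (CARD('a) - 1)"
  have tau: "K * NT \<le> \<tau>" using assms unfolding K_def .
  from count[of K] show ?thesis
  proof
    assume "e (K * NT) = 0"
    hence "e \<tau> = 0" using e_mono[OF tau] e_nonneg[of \<tau>] by simp
    thus ?thesis by (rule err_zero[OF pol])
  next
    assume kc: "K \<le> card (Elim (K * NT))"
    have sub: "Elim (K * NT) \<subseteq> Sub" unfolding Elim_def by auto
    have "card Sub \<le> card (Elim (K * NT))" using card_Sub kc unfolding K_def by simp
    hence eq: "Elim (K * NT) = Sub" using sub by (intro card_seteq) auto
    show ?thesis
    proof (rule opt_support[OF pol])
      fix s a assume nz: "pis \<tau> s a \<noteq> 0"
      have "(s, a) \<notin> Sub"
      proof
        assume "(s, a) \<in> Sub"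
        hence "(s, a) \<in> Elim (K * NT)" using eq by simp
        hence "pis \<tau> s a = 0" unfolding Elim_def using tau by auto
        thus False using nz by simp
      qed
      hence "\<not> Vs s < Qs s a" unfolding Sub_def by simp
      thus "Qs s a = Vs s" using Vs_le_Qs[of s a] by simp
    qed
  qed
qed

end


context mdp
begin

lemma greedy_opt:
  assumes p: "is_policy \<pi>" and opt: "\<And>s. V \<pi> s = Vs s" and g: "is_greedy P c \<gamma> \<pi> pihat"
  shows "optimal_policy P c \<gamma> pihat"
proof -
  have Veq: "V \<pi> = Vs" using opt by (rule ext)
  have Qeq: "Q \<pi> s a = Qs s a" for s a unfolding Qf_def Veq ..
  have ps: "prob_simplex (pihat s)" for s
  proof -
    obtain a where "\<forall>a'. pihat s a' = (if a' = a then 1 else 0)" using g unfolding is_greedy_def by blast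
    hence "pihat s = vert a" unfolding vert_def by auto
    thus ?thesis using vert_simplex by simp
  qed
  have pp: "is_policy pihat" unfolding is_policy_def using ps by simp
  have avg: "(\<Sum>a\<in>UNIV. pihat s a * Qs s a) = Vs s" for s
  proof -
    have "adv P c \<gamma> \<pi> s (pihat s) \<le> adv P c \<gamma> \<pi> s (vert (dopt s))"
      using g vert_simplex unfolding is_greedy_def by blast
    hence "(\<Sum>a\<in>UNIV. Qs s a * pihat s a) \<le> (\<Sum>a\<in>UNIV. Qs s a * vert (dopt s) a)"
      unfolding adv_def Qeq by simp
    also have "\<dots> = Vs s" unfolding vert_sum by (rule Vs_eq[symmetric])
    finally have le: "(\<Sum>a\<in>UNIV. pihat s a * Qs s a) \<le> Vs s" by (simp add: mult.commute)
    have "Vs s \<le> (\<Sum>a\<in>UNIV. pihat s a * Qs s a)"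
      by (rule wavg_ge) (use ps[of s] in \<open>auto simp: prob_simplex_def intro: Vs_le_Qs\<close>)
    thus ?thesis using le by simp
  qed
  have Vh: "V pihat s = Vs s" for s
  proof -
    have b: "cp pihat s + \<gamma> * (\<Sum>s'\<in>UNIV. Ppi P pihat s s' * Vs s') = Vs s" for s
      using avg[of s] unfolding Q_pol .
    have "V pihat s \<le> Vs s" by (rule V_le[OF pp]) (simp add: b)
    moreover have "Vs s \<le> V pihat s" by (rule V_ge[OF pp]) (simp add: b)
    ultimately show ?thesis by simp
  qed
  show ?thesis unfolding optimal_policy_def using pp Vh Vs_le_V by simp
qed

end

theorem theorem3p10:
  fixes P :: "'s::finite \<Rightarrow> 'a::finite \<Rightarrow> 's \<Rightarrow> real"
    and c :: "'s \<Rightarrow> 'a \<Rightarrow> real"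
    and \<gamma> :: real
    and pis :: "nat \<Rightarrow> 's \<Rightarrow> 'a \<Rightarrow> real"
    and \<tau> :: nat
    and pihat :: "'s \<Rightarrow> 'a \<Rightarrow> real"
  assumes "stochastic_kernel P"
    and "0 \<le> \<gamma>" and "\<gamma> < 1"
    and "is_pmd_sequence P c \<gamma> pis"
    and "\<tau> \<ge> CARD('s) * (CARD('a) - 1) * N_param \<gamma> * T_param \<gamma> CARD('s) CARD('a)"
    and "is_greedy P c \<gamma> (pis \<tau>) pihat"
  shows "optimal_policy P c \<gamma> pihat"
proof -
  interpret pmd P c \<gamma> pis "N_param \<gamma> * T_param \<gamma> CARD('s) CARD('a)" "T_param \<gamma> CARD('s) CARD('a)"
    by unfold_locales (use assms in auto)
  have "V (pis \<tau>) s = Vs s" for s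
    by (rule final_opt) (use assms(5) in \<open>simp add: mult.assoc\<close>)
  thus ?thesis by (rule greedy_opt[OF pol _ assms(6)])
qed

end
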